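(* Let $1\le p<\infty$ and let $d_{w,p}$ be a Lorentz sequence space. The set $J^j$ of all operators $T\in L(d_{w,p})$ which can be written as $T=AjB$ with $A\in L(d_{w,p})$ and $B\in L(d_{w,p},\ell_p)$ is a (two-sided) ideal in $L(d_{w,p})$.
   Context: Let $1\le p<\infty$ and let $w=(w_n)$ be a real sequence with $w_1=1$, $w_n\downarrow 0$ and $\sum_n w_n=\infty$. The Lorentz sequence space $d_{w,p}$ is the Banach space of all $x=(x_n)\in c_0$ with $\|x\|_{d_{w,p}}=\big(\sum_{n}w_n (x^*_n)^p\big)^{1/p}<\infty$, where $(x^*_n)$ is the non-increasing rearrangement of $(|x_n|)$. Let $(e_n)$ be the unit vector basis of $d_{w,p}$ and $(f_n)$ that of $\ell_p$. The formal identity $j\colon \ell_p\to d_{w,p}$ is the bounded operator with $j(f_n)=e_n$ (so $j$ maps a sequence to the same sequence). An ideal is a linear subspace $J$ with $ATB\in J$ whenever $T\in J$ and $A,B\in L(d_{w,p})$. *)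

theory Defs
  imports "HOL-Analysis.Analysis"
begin

text \<open>Sequences are modelled as functions nat => real, indexed from 0
 (so the paper's w_1 is w 0 here). Spaces are given by a carrier set and a norm.\<close>

text \<open>Non-increasing rearrangement of (|x_n|) (0-indexed): the n-th entry is
 the least s >= 0 such that at most n entries satisfy |x_k| > s.\<close>
definition dec_rearr :: "(nat \<Rightarrow> real) \<Rightarrow> nat \<Rightarrow> real" where
  "dec_rearr x n = Inf {s. 0 \<le> s \<and> finite {k. \<bar>x k\<bar> > s} \<and> card {k. \<bar>x k\<bar> > s} \<le> n}"

definition lorentz_space :: "(nat \<Rightarrow> real) \<Rightarrow> real \<Rightarrow> (nat \<Rightarrow> real) set" where
  "lorentz_space w p = {x. x \<longlonglongrightarrow> 0 \<and> summable (\<lambda>n. w n * dec_rearr x n powr p)}"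

definition lorentz_norm :: "(nat \<Rightarrow> real) \<Rightarrow> real \<Rightarrow> (nat \<Rightarrow> real) \<Rightarrow> real" where
  "lorentz_norm w p x = (\<Sum>n. w n * dec_rearr x n powr p) powr (1 / p)"

definition lp_space :: "real \<Rightarrow> (nat \<Rightarrow> real) set" where
  "lp_space p = {x. summable (\<lambda>n. \<bar>x n\<bar> powr p)}"

definition lp_norm :: "real \<Rightarrow> (nat \<Rightarrow> real) \<Rightarrow> real" where
  "lp_norm p x = (\<Sum>n. \<bar>x n\<bar> powr p) powr (1 / p)"

text \<open>Bounded linear operators between (D1,N1) and (D2,N2), made extensional:
 an operator is 0 outside its domain, so equality of operators is equality on D1.\<close>
definition bounded_ops ::
  "(nat \<Rightarrow> real) set \<Rightarrow> ((nat \<Rightarrow> real) \<Rightarrow> real) \<Rightarrow> (nat \<Rightarrow> real) set \<Rightarrow> ((nat \<Rightarrow> real) \<Rightarrow> real)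
   \<Rightarrow> ((nat \<Rightarrow> real) \<Rightarrow> (nat \<Rightarrow> real)) set" where
  "bounded_ops D1 N1 D2 N2 = {T.
     (\<forall>x\<in>D1. T x \<in> D2) \<and>
     (\<forall>x\<in>D1. \<forall>y\<in>D1. T (\<lambda>n. x n + y n) = (\<lambda>n. T x n + T y n)) \<and>
     (\<forall>c. \<forall>x\<in>D1. T (\<lambda>n. c * x n) = (\<lambda>n. c * T x n)) \<and>
     (\<exists>C. \<forall>x\<in>D1. N2 (T x) \<le> C * N1 x) \<and>
     (\<forall>x. x \<notin> D1 \<longrightarrow> T x = (\<lambda>n. 0))}"

definition formal_identity :: "real \<Rightarrow> (nat \<Rightarrow> real) \<Rightarrow> (nat \<Rightarrow> real)" where
  "formal_identity p x = (if x \<in> lp_space p then x else (\<lambda>n. 0))"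

definition is_operator_ideal ::
  "(nat \<Rightarrow> real) set \<Rightarrow> ((nat \<Rightarrow> real) \<Rightarrow> real) \<Rightarrow> ((nat \<Rightarrow> real) \<Rightarrow> (nat \<Rightarrow> real)) set \<Rightarrow> bool" where
  "is_operator_ideal D N J \<longleftrightarrow>
     J \<subseteq> bounded_ops D N D N \<and>
     (\<lambda>x n. 0) \<in> J \<and>
     (\<forall>S\<in>J. \<forall>T\<in>J. (\<lambda>x n. S x n + T x n) \<in> J) \<and>
     (\<forall>c. \<forall>T\<in>J. (\<lambda>x n. c * T x n) \<in> J) \<and>
     (\<forall>T\<in>J. \<forall>A\<in>bounded_ops D N D N. \<forall>B\<in>bounded_ops D N D N. (\<lambda>x. A (T (B x))) \<in> J)"

definition J_j :: "(nat \<Rightarrow> real) \<Rightarrow> real \<Rightarrow> ((nat \<Rightarrow> real) \<Rightarrow> (nat \<Rightarrow> real)) set" where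
  "J_j w p = {T. \<exists>A B.
      A \<in> bounded_ops (lorentz_space w p) (lorentz_norm w p) (lorentz_space w p) (lorentz_norm w p) \<and>
      B \<in> bounded_ops (lorentz_space w p) (lorentz_norm w p) (lp_space p) (lp_norm p) \<and>
      T = (\<lambda>x. A (formal_identity p (B x)))}"

end

theory Submission
  imports Defs
begin


definition SS :: "(nat \<Rightarrow> real) \<Rightarrow> nat \<Rightarrow> real set" where
  "SS x n = {s. 0 \<le> s \<and> finite {k. \<bar>x k\<bar> > s} \<and> card {k. \<bar>x k\<bar> > s} \<le> n}"

lemma dec_SS: "dec_rearr x n = Inf (SS x n)"
  by (simp add: dec_rearr_def SS_def)

lemma SS_ne: assumes "Bseq x" shows "SS x n \<noteq> {}"
proof -
  obtain K where K: "\<And>k. \<bar>x k\<bar> \<le> K" using assms by (auto simp: Bseq_def)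
  have e: "{k. \<bar>x k\<bar> > max K 0} = {}" using K by (auto simp: not_less)
  have "max K 0 \<in> SS x n" unfolding SS_def mem_Collect_eq e by simp
  then show ?thesis by blast
qed

lemma SS_bdd: "bdd_below (SS x n)"
  by (rule bdd_belowI[of _ 0]) (auto simp: SS_def)

lemma dec_lower: "s \<in> SS x n \<Longrightarrow> dec_rearr x n \<le> s"
  unfolding dec_SS by (rule cInf_lower[OF _ SS_bdd])

lemma dec_nonneg: "Bseq x \<Longrightarrow> 0 \<le> dec_rearr x n"
  unfolding dec_SS by (rule cInf_greatest[OF SS_ne]) (auto simp: SS_def)

lemma SS_up: assumes "s \<in> SS x n" "s \<le> t" shows "t \<in> SS x n"
proof -
  have sub: "{k. \<bar>x k\<bar> > t} \<subseteq> {k. \<bar>x k\<bar> > s}" using assms(2) by auto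
  have fin: "finite {k. \<bar>x k\<bar> > s}" using assms(1) by (simp add: SS_def)
  show ?thesis using assms finite_subset[OF sub fin] card_mono[OF fin sub]
    by (auto simp: SS_def)
qed

lemma dec_eps: assumes "Bseq x" "e > 0" shows "dec_rearr x n + e \<in> SS x n"
proof -
  have "Inf (SS x n) < Inf (SS x n) + e" using assms by simp
  then obtain s where "s \<in> SS x n" "s < Inf (SS x n) + e"
    using cInf_lessD[OF SS_ne[OF assms(1)]] by blast
  then show ?thesis by (auto simp: dec_SS intro: SS_up)
qed

lemma dec_le_eps: assumes "\<And>e. e > 0 \<Longrightarrow> dec_rearr y m \<le> b + e" shows "dec_rearr y m \<le> b"
  using assms by (rule field_le_epsilon)

lemma SS_Suc: "SS x n \<subseteq> SS x (Suc n)" by (auto simp: SS_def)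

lemma dec_mono_Suc: assumes "Bseq x" shows "dec_rearr x (Suc n) \<le> dec_rearr x n"
  by (rule dec_le_eps, rule dec_lower) (use dec_eps[OF assms] SS_Suc in blast)

lemma dec_mono: assumes "Bseq x" "m \<le> n" shows "dec_rearr x n \<le> dec_rearr x m"
  using assms(2) by (induction rule: dec_induct) (auto intro: order.trans[OF dec_mono_Suc[OF assms(1)]])

lemma dec_zero: "dec_rearr (\<lambda>n. 0) n = 0"
proof -
  have "0 \<in> SS (\<lambda>n. 0) n" by (simp add: SS_def)
  then show ?thesis using dec_lower[of 0 "\<lambda>n. 0" n] dec_nonneg[of "\<lambda>n. 0" n] by (simp add: Bseq_def)
qed

lemma dec_scale: assumes "Bseq x" shows "dec_rearr (\<lambda>k. c * x k) n \<le> \<bar>c\<bar> * dec_rearr x n"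
proof (cases "c = 0")
  case True then show ?thesis using dec_zero by simp
next
  case False
  show ?thesis
  proof (rule dec_le_eps)
    fix e :: real assume e: "e > 0"
    have "dec_rearr x n + e / \<bar>c\<bar> \<in> SS x n" using dec_eps[OF assms] e False by simp
    moreover have "\<And>s. {k. \<bar>c * x k\<bar> > \<bar>c\<bar> * s} = {k. \<bar>x k\<bar> > s}" using False by (auto simp: abs_mult)
    ultimately have "\<bar>c\<bar> * (dec_rearr x n + e / \<bar>c\<bar>) \<in> SS (\<lambda>k. c * x k) n"
      by (auto simp: SS_def)
    then show "dec_rearr (\<lambda>k. c * x k) n \<le> \<bar>c\<bar> * dec_rearr x n + e"
    proof -
      have "\<bar>c\<bar> * (dec_rearr x n + e / \<bar>c\<bar>) = \<bar>c\<bar> * dec_rearr x n + e" using False by (simp add: field_simps)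
      then show ?thesis using dec_lower[OF \<open>\<bar>c\<bar> * (dec_rearr x n + e / \<bar>c\<bar>) \<in> SS (\<lambda>k. c * x k) n\<close>] by simp
    qed
  qed
qed

lemma dec_add: assumes "Bseq x" "Bseq y"
  shows "dec_rearr (\<lambda>k. x k + y k) (2 * n) \<le> dec_rearr x n + dec_rearr y n"
proof (rule dec_le_eps)
  fix e :: real assume e: "e > 0"
  define a where "a = dec_rearr x n + e/2"
  define b where "b = dec_rearr y n + e/2"
  have a: "a \<in> SS x n" unfolding a_def using dec_eps[OF assms(1)] e by simp
  have b: "b \<in> SS y n" unfolding b_def using dec_eps[OF assms(2)] e by simp
  have sub: "{k. \<bar>x k + y k\<bar> > a + b} \<subseteq> {k. \<bar>x k\<bar> > a} \<union> {k. \<bar>y k\<bar> > b}" by auto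
  have fa: "finite {k. \<bar>x k\<bar> > a}" "card {k. \<bar>x k\<bar> > a} \<le> n" "0 \<le> a" using a by (auto simp: SS_def)
  have fb: "finite {k. \<bar>y k\<bar> > b}" "card {k. \<bar>y k\<bar> > b} \<le> n" "0 \<le> b" using b by (auto simp: SS_def)
  have fu: "finite ({k. \<bar>x k\<bar> > a} \<union> {k. \<bar>y k\<bar> > b})" using fa fb by simp
  have "card {k. \<bar>x k + y k\<bar> > a + b} \<le> card ({k. \<bar>x k\<bar> > a} \<union> {k. \<bar>y k\<bar> > b})"
    by (rule card_mono[OF fu sub])
  also have "\<dots> \<le> 2 * n" using card_Un_le[of "{k. \<bar>x k\<bar> > a}" "{k. \<bar>y k\<bar> > b}"] fa fb by linarith
  finally have "a + b \<in> SS (\<lambda>k. x k + y k) (2*n)"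
    using finite_subset[OF sub fu] fa fb by (simp add: SS_def)
  then show "dec_rearr (\<lambda>k. x k + y k) (2 * n) \<le> dec_rearr x n + dec_rearr y n + e"
    using dec_lower a_def b_def by fastforce
qed

lemma dec_sub: assumes "Bseq x" "inj g" shows "dec_rearr (\<lambda>k. x (g k)) n \<le> dec_rearr x n"
proof (rule dec_le_eps)
  fix e :: real assume e: "e > 0"
  define s where "s = dec_rearr x n + e"
  have s: "s \<in> SS x n" unfolding s_def using dec_eps[OF assms(1) e] .
  have fin: "finite {k. \<bar>x k\<bar> > s}" and c: "card {k. \<bar>x k\<bar> > s} \<le> n" "0 \<le> s" using s by (auto simp: SS_def)
  have eq: "{k. \<bar>x (g k)\<bar> > s} = g -` {k. \<bar>x k\<bar> > s}" by auto
  have f2: "finite {k. \<bar>x (g k)\<bar> > s}" unfolding eq using finite_vimageI[OF fin assms(2)] .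
  have "card {k. \<bar>x (g k)\<bar> > s} \<le> card {k. \<bar>x k\<bar> > s}"
    by (rule card_inj_on_le[of g, OF _ _ fin]) (use assms(2) in \<open>auto simp: inj_on_def\<close>)
  then have "s \<in> SS (\<lambda>k. x (g k)) n" using f2 c by (simp add: SS_def)
  then show "dec_rearr (\<lambda>k. x (g k)) n \<le> dec_rearr x n + e" using dec_lower s_def by blast
qed



lemma fin_gt: fixes y :: "nat \<Rightarrow> real" assumes "y \<longlonglongrightarrow> 0" "s > 0" shows "finite {k. \<bar>y k\<bar> > s}"
proof -
  obtain N where N0: "\<forall>k\<ge>N. norm (y k - 0) < s"
    using LIMSEQ_D[OF assms(1) assms(2)] by blast
  then have N: "\<And>k. k \<ge> N \<Longrightarrow> \<bar>y k\<bar> < s" by simp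
  have "{k. \<bar>y k\<bar> > s} \<subseteq> {..<N}" using N by (metis lessThan_iff mem_Collect_eq not_le not_less_iff_gr_or_eq subsetI)
  then show ?thesis using finite_subset by blast
qed

lemma key_new: assumes "y \<longlonglongrightarrow> 0" "finite S" "card S \<le> n"
  shows "\<exists>k. k \<notin> S \<and> dec_rearr y n \<le> \<bar>y k\<bar>"
proof -
  have bs: "Bseq y" using assms(1) by (intro convergent_imp_Bseq convergentI)
  define d where "d = dec_rearr y n"
  have d0: "0 \<le> d" using dec_nonneg[OF bs] d_def by simp
  show ?thesis
  proof (cases "d = 0")
    case True
    obtain k where "k \<notin> S" using assms(2) ex_new_if_finite[OF infinite_UNIV_nat] by blast
    then show ?thesis using True d_def by auto
  next
    case False
    then have dpos: "d > 0" using d0 by simp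
    define F where "F = {k. \<bar>y k\<bar> > d/2}"
    have fF: "finite F" unfolding F_def using fin_gt[OF assms(1), of "d/2"] dpos by simp
    define V where "V = insert (d/2) ((\<lambda>k. \<bar>y k\<bar>) ` {k\<in>F. \<bar>y k\<bar> < d})"
    have fV: "finite V" "V \<noteq> {}" using fF by (auto simp: V_def)
    define s1 where "s1 = Max V"
    have s1d: "s1 < d" unfolding s1_def using fV dpos by (simp add: Max_less_iff V_def)
    have s10: "d/2 \<le> s1" unfolding s1_def by (rule Max_ge[OF fV(1)]) (simp add: V_def)
    have notin: "s1 \<notin> SS y n"
    proof
      assume "s1 \<in> SS y n" then have "d \<le> s1" using dec_lower d_def by blast
      then show False using s1d by simp
    qed
    define B where "B = {k. \<bar>y k\<bar> > s1}"
    have BF: "B \<subseteq> F" unfolding B_def F_def using s10 by auto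
    have fB: "finite B" using finite_subset[OF BF fF] .
    have s0: "0 \<le> s1" using s10 dpos by linarith
    have "\<not> card B \<le> n" using notin fB s0 unfolding SS_def B_def by blast
    then have cB: "card B > n" by simp
    have "\<not> B \<subseteq> S"
    proof
      assume "B \<subseteq> S"
      then have "card B \<le> card S" by (rule card_mono[OF assms(2)])
      then show False using cB assms(3) by linarith
    qed
    then obtain k where k: "k \<in> B" "k \<notin> S" by blast
    have "d \<le> \<bar>y k\<bar>"
    proof (rule ccontr)
      assume "\<not> d \<le> \<bar>y k\<bar>"
      then have "\<bar>y k\<bar> \<in> V" using k BF unfolding V_def by auto
      then have "\<bar>y k\<bar> \<le> s1" unfolding s1_def using fV by simp
      then show False using k unfolding B_def by simp
    qed
    then show ?thesis using k d_def by auto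
  qed
qed

lemma greedy: assumes "y \<longlonglongrightarrow> 0" "p \<ge> 0"
  shows "\<exists>S. finite S \<and> card S = N \<and> (\<forall>k\<in>S. dec_rearr y N \<le> \<bar>y k\<bar>) \<and>
     (\<Sum>n<N. dec_rearr y n powr p) \<le> (\<Sum>k\<in>S. \<bar>y k\<bar> powr p)"
proof (induction N)
  case 0
  then show ?case by (intro exI[of _ "{}"]) simp
next
  case (Suc N)
  have bs: "Bseq y" using assms(1) by (intro convergent_imp_Bseq convergentI)
  from Suc obtain S where S: "finite S" "card S = N" "\<forall>k\<in>S. dec_rearr y N \<le> \<bar>y k\<bar>"
    "(\<Sum>n<N. dec_rearr y n powr p) \<le> (\<Sum>k\<in>S. \<bar>y k\<bar> powr p)" by blast
  obtain k where k: "k \<notin> S" "dec_rearr y N \<le> \<bar>y k\<bar>" using key_new[OF assms(1) S(1)] S(2) by auto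
  have mono: "dec_rearr y (Suc N) \<le> dec_rearr y N" by (rule dec_mono_Suc[OF bs])
  have "dec_rearr y N powr p \<le> \<bar>y k\<bar> powr p"
    by (rule powr_mono2[OF assms(2) dec_nonneg[OF bs] k(2)])
  then have "(\<Sum>n<Suc N. dec_rearr y n powr p) \<le> (\<Sum>k\<in>insert k S. \<bar>y k\<bar> powr p)"
    using S(4) S(1) k(1) by simp
  moreover have "\<forall>k'\<in>insert k S. dec_rearr y (Suc N) \<le> \<bar>y k'\<bar>" using S(3) k mono by auto
  ultimately show ?case using S k by (intro exI[of _ "insert k S"]) auto
qed

lemma lp_to_lorentz:
  assumes p: "1 \<le> p" and w: "\<And>n. w n > 0" "\<And>n. w n \<le> 1" and y: "y \<in> lp_space p"
  shows "y \<in> lorentz_space w p \<and> lorentz_norm w p y \<le> lp_norm p y"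
proof -
  have sy: "summable (\<lambda>n. \<bar>y n\<bar> powr p)" using y by (simp add: lp_space_def)
  have "(\<lambda>n. \<bar>y n\<bar> powr p) \<longlonglongrightarrow> 0" using summable_LIMSEQ_zero[OF sy] .
  then have "(\<lambda>n. (\<bar>y n\<bar> powr p) powr (1/p)) \<longlonglongrightarrow> 0"
    by (rule tendsto_zero_powrI) (use p in auto)
  moreover have "\<And>n. (\<bar>y n\<bar> powr p) powr (1/p) = \<bar>y n\<bar>" using p by (simp add: powr_powr)
  ultimately have "(\<lambda>n. \<bar>y n\<bar>) \<longlonglongrightarrow> 0" by simp
  then have y0: "y \<longlonglongrightarrow> 0" by (simp add: tendsto_rabs_zero_iff)
  have bs: "Bseq y" using y0 by (intro convergent_imp_Bseq convergentI)
  define P where "P = (\<Sum>n. \<bar>y n\<bar> powr p)"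
  have part: "(\<Sum>n<N. dec_rearr y n powr p) \<le> P" for N
  proof -
    obtain S where S: "finite S" "(\<Sum>n<N. dec_rearr y n powr p) \<le> (\<Sum>k\<in>S. \<bar>y k\<bar> powr p)"
      using greedy[OF y0, of p N] p by auto
    have "(\<Sum>k\<in>S. \<bar>y k\<bar> powr p) \<le> P" unfolding P_def by (rule sum_le_suminf[OF sy S(1)]) auto
    then show ?thesis using S by simp
  qed
  have sd: "summable (\<lambda>n. dec_rearr y n powr p)"
    by (rule bounded_imp_summable[where B=P]) (use part in \<open>auto simp: lessThan_Suc_atMost[symmetric] simp del: sum.lessThan_Suc\<close>)
  have le1: "(\<Sum>n. dec_rearr y n powr p) \<le> P" by (rule suminf_le_const[OF sd part])
  have tle: "norm (w n * dec_rearr y n powr p) \<le> dec_rearr y n powr p" for n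
    using w[of n] by (simp add: abs_mult mult_left_le_one_le)
  have sw: "summable (\<lambda>n. w n * dec_rearr y n powr p)"
    by (rule summable_comparison_test'[OF sd tle])
  have "(\<Sum>n. w n * dec_rearr y n powr p) \<le> (\<Sum>n. dec_rearr y n powr p)"
    by (rule suminf_le[OF _ sw sd]) (rule mult_left_le_one_le[OF powr_ge_zero less_imp_le[OF w(1)] w(2)])
  then have "(\<Sum>n. w n * dec_rearr y n powr p) \<le> P" using le1 by simp
  moreover have "0 \<le> (\<Sum>n. w n * dec_rearr y n powr p)"
    by (rule suminf_nonneg[OF sw]) (simp add: less_imp_le[OF w(1)])
  ultimately have "lorentz_norm w p y \<le> lp_norm p y"
    unfolding lorentz_norm_def lp_norm_def P_def using p by (intro powr_mono2) auto
  then show ?thesis using y0 sw by (simp add: lorentz_space_def)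
qed



lemma max_powr: "0 \<le> a \<Longrightarrow> 0 \<le> b \<Longrightarrow> max a b powr r \<le> a powr r + b powr r"
  for a b r :: real by (cases "a \<le> b") (auto simp: max_def)

lemma powr_sum_le: fixes P Q p :: real assumes "0 \<le> P" "0 \<le> Q" "1 \<le> p"
  shows "(P + Q) powr (1/p) \<le> 2 * (P powr (1/p) + Q powr (1/p))"
proof -
  have "(P + Q) powr (1/p) \<le> (2 * max P Q) powr (1/p)"
    using assms by (intro powr_mono2) auto
  also have "\<dots> = 2 powr (1/p) * max P Q powr (1/p)" by (rule powr_mult)
  also have "\<dots> \<le> 2 * (P powr (1/p) + Q powr (1/p))"
  proof (rule mult_mono)
    have "2 powr (1/p) \<le> 2 powr 1" using assms by (intro powr_mono) auto
    then show "2 powr (1/p) \<le> 2" by simp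
  qed (use max_powr[OF assms(1,2)] in auto)
  finally show ?thesis .
qed

lemma lor_nonneg: "0 \<le> lorentz_norm w p x" by (simp add: lorentz_norm_def)
lemma lp_nonneg: "0 \<le> lp_norm p x" by (simp add: lp_norm_def)

lemma D_Bseq: "x \<in> lorentz_space w p \<Longrightarrow> Bseq x"
  by (auto simp: lorentz_space_def intro: convergent_imp_Bseq convergentI)

lemma D_sub:
  assumes p: "0 \<le> p" and w: "\<And>n. w n > 0" and x: "x \<in> lorentz_space w p"
    and g: "inj g" "strict_mono g"
  shows "(\<lambda>k. x (g k)) \<in> lorentz_space w p \<and> lorentz_norm w p (\<lambda>k. x (g k)) \<le> lorentz_norm w p x"
proof -
  have bs: "Bseq x" using x by (rule D_Bseq)
  have bs2: "Bseq (\<lambda>k. x (g k))" using Bseq_subseq[OF bs] .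
  have x0: "x \<longlonglongrightarrow> 0" and sx: "summable (\<lambda>n. w n * dec_rearr x n powr p)"
    using x by (auto simp: lorentz_space_def)
  have le: "w n * dec_rearr (\<lambda>k. x (g k)) n powr p \<le> w n * dec_rearr x n powr p" for n
    using w[of n] by (intro mult_left_mono powr_mono2 p dec_nonneg[OF bs2] dec_sub[OF bs g(1)]) auto
  have nn: "0 \<le> w n * dec_rearr (\<lambda>k. x (g k)) n powr p" for n using w[of n] by simp
  have s2: "summable (\<lambda>n. w n * dec_rearr (\<lambda>k. x (g k)) n powr p)"
    by (rule summable_comparison_test'[OF sx]) (use le nn in simp)
  have "(\<Sum>n. w n * dec_rearr (\<lambda>k. x (g k)) n powr p) \<le> (\<Sum>n. w n * dec_rearr x n powr p)"
    by (rule suminf_le[OF le s2 sx])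
  then have "lorentz_norm w p (\<lambda>k. x (g k)) \<le> lorentz_norm w p x"
    unfolding lorentz_norm_def using p by (intro powr_mono2 suminf_nonneg[OF s2] nn) auto
  moreover have "(\<lambda>k. x (g k)) \<longlonglongrightarrow> 0" using LIMSEQ_subseq_LIMSEQ[OF x0 g(2)] by (simp add: comp_def)
  ultimately show ?thesis using s2 by (simp add: lorentz_space_def)
qed

lemma D_scale:
  assumes p: "0 \<le> p" and w: "\<And>n. w n > 0" and x: "x \<in> lorentz_space w p"
  shows "(\<lambda>k. c * x k) \<in> lorentz_space w p"
proof -
  have bs: "Bseq x" using x by (rule D_Bseq)
  have x0: "x \<longlonglongrightarrow> 0" and sx: "summable (\<lambda>n. w n * dec_rearr x n powr p)"
    using x by (auto simp: lorentz_space_def)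
  have bs2: "Bseq (\<lambda>k. c * x k)" using tendsto_mult_right_zero[OF x0, of c] by (intro convergent_imp_Bseq convergentI)
  have le: "w n * dec_rearr (\<lambda>k. c * x k) n powr p \<le> \<bar>c\<bar> powr p * (w n * dec_rearr x n powr p)" for n
  proof -
    have "dec_rearr (\<lambda>k. c * x k) n powr p \<le> (\<bar>c\<bar> * dec_rearr x n) powr p"
      by (intro powr_mono2 p dec_nonneg[OF bs2] dec_scale[OF bs])
    also have "\<dots> = \<bar>c\<bar> powr p * dec_rearr x n powr p" by (rule powr_mult)
    finally show ?thesis using w[of n] by (simp add: mult_left_mono algebra_simps)
  qed
  have nn: "0 \<le> w n * dec_rearr (\<lambda>k. c * x k) n powr p" for n using w[of n] by simp
  have s2: "summable (\<lambda>n. w n * dec_rearr (\<lambda>k. c * x k) n powr p)"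
    by (rule summable_comparison_test'[OF summable_mult[OF sx]]) (use le nn in simp)
  moreover have "(\<lambda>k. c * x k) \<longlonglongrightarrow> 0" using x0 by (rule tendsto_mult_right_zero)
  ultimately show ?thesis by (simp add: lorentz_space_def)
qed

lemma sums_double: fixes G :: "nat \<Rightarrow> real" assumes "summable G"
  shows "(\<lambda>m. G (m div 2)) sums (suminf G + suminf G)"
proof -
  have "(\<lambda>n. if even n then G (n div 2) else G ((n - 1) div 2)) sums (suminf G + suminf G)"
    by (rule sums_if) (use assms in \<open>simp_all add: summable_sums\<close>)
  moreover have "(\<lambda>n. if even n then G (n div 2) else G ((n - 1) div 2)) = (\<lambda>m. G (m div 2))"
    by (rule ext) (auto elim: oddE)
  ultimately show ?thesis by simp
qed

lemma D_add:
  assumes p: "1 \<le> p" and w: "\<And>n. w n > 0" and dw: "decseq w"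
    and x: "x \<in> lorentz_space w p" and y: "y \<in> lorentz_space w p"
  shows "(\<lambda>k. x k + y k) \<in> lorentz_space w p \<and>
     lorentz_norm w p (\<lambda>k. x k + y k) \<le> (2 powr (p+1)) powr (1/p) * 2 * (lorentz_norm w p x + lorentz_norm w p y)"
proof -
  define h where "h = (\<lambda>k. x k + y k)"
  have bx: "Bseq x" using x by (rule D_Bseq)
  have by': "Bseq y" using y by (rule D_Bseq)
  have x0: "x \<longlonglongrightarrow> 0" and sx: "summable (\<lambda>n. w n * dec_rearr x n powr p)"
    using x by (auto simp: lorentz_space_def)
  have y0: "y \<longlonglongrightarrow> 0" and sy: "summable (\<lambda>n. w n * dec_rearr y n powr p)"
    using y by (auto simp: lorentz_space_def)
  have h0: "h \<longlonglongrightarrow> 0" unfolding h_def using tendsto_add[OF x0 y0] by simp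
  have bh: "Bseq h" using h0 by (intro convergent_imp_Bseq convergentI)
  define G where "G n = w n * (dec_rearr x n + dec_rearr y n) powr p" for n
  define H where "H n = 2 powr p * (w n * dec_rearr x n powr p + w n * dec_rearr y n powr p)" for n
  have sH: "summable H" unfolding H_def by (intro summable_mult summable_add sx sy)
  have GH: "G n \<le> H n" for n
  proof -
    have a: "0 \<le> dec_rearr x n" "0 \<le> dec_rearr y n" using dec_nonneg bx by' by auto
    have "(dec_rearr x n + dec_rearr y n) powr p \<le> (2 * max (dec_rearr x n) (dec_rearr y n)) powr p"
      using a p by (intro powr_mono2) auto
    also have "\<dots> = 2 powr p * max (dec_rearr x n) (dec_rearr y n) powr p" by (rule powr_mult)
    also have "\<dots> \<le> 2 powr p * (dec_rearr x n powr p + dec_rearr y n powr p)"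
      by (intro mult_left_mono max_powr a) auto
    finally have "w n * (dec_rearr x n + dec_rearr y n) powr p \<le> w n * (2 powr p * (dec_rearr x n powr p + dec_rearr y n powr p))"
      using w[of n] by (intro mult_left_mono) auto
    then show ?thesis unfolding G_def H_def by (simp add: algebra_simps)
  qed
  have Gnn: "0 \<le> G n" for n unfolding G_def using w[of n] by simp
  have sG: "summable G" by (rule summable_comparison_test'[OF sH]) (use GH Gnn in simp)
  have sGH: "suminf G \<le> suminf H" by (rule suminf_le[OF GH sG sH])
  have sumH: "suminf H = 2 powr p * ((\<Sum>n. w n * dec_rearr x n powr p) + (\<Sum>n. w n * dec_rearr y n powr p))"
    unfolding H_def by (simp add: suminf_mult suminf_add[OF sx sy] summable_add[OF sx sy])
  have tle: "w m * dec_rearr h m powr p \<le> G (m div 2)" for m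
  proof -
    have "dec_rearr h m \<le> dec_rearr h (2 * (m div 2))" by (rule dec_mono[OF bh]) simp
    also have "\<dots> \<le> dec_rearr x (m div 2) + dec_rearr y (m div 2)" unfolding h_def by (rule dec_add[OF bx by'])
    finally have "dec_rearr h m powr p \<le> (dec_rearr x (m div 2) + dec_rearr y (m div 2)) powr p"
      using p by (intro powr_mono2 dec_nonneg[OF bh]) auto
    moreover have "w m \<le> w (m div 2)" using dw by (simp add: decseq_def)
    ultimately show ?thesis unfolding G_def using w[of m]
      by (intro mult_mono) auto
  qed
  have tnn: "0 \<le> w m * dec_rearr h m powr p" for m using w[of m] by simp
  have sG2: "summable (\<lambda>m. G (m div 2))" using sums_double[OF sG] by (rule sums_summable)
  have sh: "summable (\<lambda>m. w m * dec_rearr h m powr p)"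
    by (rule summable_comparison_test'[OF sG2]) (use tle tnn in simp)
  have "(\<Sum>m. w m * dec_rearr h m powr p) \<le> (\<Sum>m. G (m div 2))" by (rule suminf_le[OF tle sh sG2])
  also have "\<dots> = suminf G + suminf G" using sums_double[OF sG] by (rule sums_unique[symmetric])
  also have "\<dots> \<le> 2 powr (p+1) * ((\<Sum>n. w n * dec_rearr x n powr p) + (\<Sum>n. w n * dec_rearr y n powr p))"
    using sGH sumH by (simp add: powr_add)
  finally have le: "(\<Sum>m. w m * dec_rearr h m powr p) \<le> 2 powr (p+1) * ((\<Sum>n. w n * dec_rearr x n powr p) + (\<Sum>n. w n * dec_rearr y n powr p))" .
  have px: "0 \<le> (\<Sum>n. w n * dec_rearr x n powr p)" by (rule suminf_nonneg[OF sx]) (simp add: less_imp_le[OF w])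
  have py: "0 \<le> (\<Sum>n. w n * dec_rearr y n powr p)" by (rule suminf_nonneg[OF sy]) (simp add: less_imp_le[OF w])
  have "lorentz_norm w p h \<le> (2 powr (p+1) * ((\<Sum>n. w n * dec_rearr x n powr p) + (\<Sum>n. w n * dec_rearr y n powr p))) powr (1/p)"
    unfolding lorentz_norm_def using p le by (intro powr_mono2 suminf_nonneg[OF sh] tnn) auto
  also have "\<dots> = (2 powr (p+1)) powr (1/p) * ((\<Sum>n. w n * dec_rearr x n powr p) + (\<Sum>n. w n * dec_rearr y n powr p)) powr (1/p)"
    by (rule powr_mult)
  also have "\<dots> \<le> (2 powr (p+1)) powr (1/p) * (2 * (lorentz_norm w p x + lorentz_norm w p y))"
    unfolding lorentz_norm_def by (intro mult_left_mono powr_sum_le px py p) auto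
  finally have "lorentz_norm w p h \<le> (2 powr (p+1)) powr (1/p) * 2 * (lorentz_norm w p x + lorentz_norm w p y)"
    by (simp add: mult.assoc)
  then show ?thesis using h0 sh unfolding h_def by (simp add: lorentz_space_def)
qed



lemma bops_zero: assumes "T \<in> bounded_ops D1 N1 D2 N2" "(\<lambda>n. 0) \<in> D1"
  shows "T (\<lambda>n. 0) = (\<lambda>n. 0)"
proof -
  have "\<forall>c. \<forall>x\<in>D1. T (\<lambda>n. c * x n) = (\<lambda>n. c * T x n)"
    using assms(1) unfolding bounded_ops_def by blast
  from bspec[OF spec[OF this, of 0] assms(2)] show ?thesis by simp
qed

lemma bops_into: assumes "T \<in> bounded_ops D1 N1 D2 N2" "(\<lambda>n. 0) \<in> D2"
  shows "T z \<in> D2"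
  using assms unfolding bounded_ops_def by (cases "z \<in> D1") auto

lemma bops_add: "T \<in> bounded_ops D1 N1 D2 N2 \<Longrightarrow> x \<in> D1 \<Longrightarrow> y \<in> D1 \<Longrightarrow> T (\<lambda>n. x n + y n) = (\<lambda>n. T x n + T y n)"
  unfolding bounded_ops_def by blast
lemma bops_scale: "T \<in> bounded_ops D1 N1 D2 N2 \<Longrightarrow> x \<in> D1 \<Longrightarrow> T (\<lambda>n. c * x n) = (\<lambda>n. c * T x n)"
  unfolding bounded_ops_def by blast
lemma bops_out: "T \<in> bounded_ops D1 N1 D2 N2 \<Longrightarrow> x \<notin> D1 \<Longrightarrow> T x = (\<lambda>n. 0)"
  unfolding bounded_ops_def by blast
lemma bops_in: "T \<in> bounded_ops D1 N1 D2 N2 \<Longrightarrow> x \<in> D1 \<Longrightarrow> T x \<in> D2"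
  unfolding bounded_ops_def by blast
lemma bops_bound: assumes "T \<in> bounded_ops D1 N1 D2 N2" "\<And>x. 0 \<le> N1 x"
  obtains C where "C \<ge> 0" "\<And>x. x \<in> D1 \<Longrightarrow> N2 (T x) \<le> C * N1 x"
proof -
  obtain C where C: "\<And>x. x \<in> D1 \<Longrightarrow> N2 (T x) \<le> C * N1 x" using assms(1) unfolding bounded_ops_def by blast
  have "N2 (T x) \<le> max C 0 * N1 x" if "x \<in> D1" for x
    using C[OF that] mult_right_mono[OF max.cobounded1[of C 0] assms(2)[of x]] by linarith
  then show ?thesis using that[of "max C 0"] by auto
qed

lemma bops_intro:
  assumes "\<And>x. x \<in> D1 \<Longrightarrow> T x \<in> D2"
    "\<And>x y. x \<in> D1 \<Longrightarrow> y \<in> D1 \<Longrightarrow> T (\<lambda>n. x n + y n) = (\<lambda>n. T x n + T y n)"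
    "\<And>c x. x \<in> D1 \<Longrightarrow> T (\<lambda>n. c * x n) = (\<lambda>n. c * T x n)"
    "\<And>x. x \<in> D1 \<Longrightarrow> N2 (T x) \<le> C * N1 x"
    "\<And>x. x \<notin> D1 \<Longrightarrow> T x = (\<lambda>n. 0)"
  shows "T \<in> bounded_ops D1 N1 D2 N2"
  using assms unfolding bounded_ops_def by blast

lemma bops_comp:
  assumes T1: "T1 \<in> bounded_ops D1 N1 D2 N2" and T2: "T2 \<in> bounded_ops D2 N2 D3 N3"
    and z: "(\<lambda>n. 0) \<in> D2" and n1: "\<And>x. 0 \<le> N1 x" and n2: "\<And>x. 0 \<le> N2 x"
  shows "(\<lambda>x. T2 (T1 x)) \<in> bounded_ops D1 N1 D3 N3"
proof -
  obtain C1 where C1: "C1 \<ge> 0" "\<And>x. x \<in> D1 \<Longrightarrow> N2 (T1 x) \<le> C1 * N1 x" using bops_bound[OF T1 n1] by blast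
  obtain C2 where C2: "C2 \<ge> 0" "\<And>x. x \<in> D2 \<Longrightarrow> N3 (T2 x) \<le> C2 * N2 x" using bops_bound[OF T2 n2] by blast
  show ?thesis
  proof (rule bops_intro[where C = "C2 * C1"])
    fix x assume x: "x \<in> D1"
    show "T2 (T1 x) \<in> D3" by (rule bops_in[OF T2 bops_in[OF T1 x]])
    have "N3 (T2 (T1 x)) \<le> C2 * N2 (T1 x)" by (rule C2(2)[OF bops_in[OF T1 x]])
    also have "\<dots> \<le> C2 * (C1 * N1 x)" by (rule mult_left_mono[OF C1(2)[OF x] C2(1)])
    finally show "N3 (T2 (T1 x)) \<le> C2 * C1 * N1 x" by (simp add: mult.assoc)
    fix c show "T2 (T1 (\<lambda>n. c * x n)) = (\<lambda>n. c * T2 (T1 x) n)"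
      using bops_scale[OF T1 x] bops_scale[OF T2 bops_in[OF T1 x]] by simp
    fix y assume y: "y \<in> D1"
    show "T2 (T1 (\<lambda>n. x n + y n)) = (\<lambda>n. T2 (T1 x) n + T2 (T1 y) n)"
      using bops_add[OF T1 x y] bops_add[OF T2 bops_in[OF T1 x] bops_in[OF T1 y]] by simp
  next
    fix x assume "x \<notin> D1"
    then show "T2 (T1 x) = (\<lambda>n. 0)" using bops_out[OF T1] bops_zero[OF T2 z] by simp
  qed
qed

lemma zero_D: "(\<lambda>n. 0) \<in> lorentz_space w p"
  by (simp add: lorentz_space_def dec_zero)
lemma zero_L: "(\<lambda>n. 0) \<in> lp_space p"
  by (simp add: lp_space_def)

definition il :: "(nat \<Rightarrow> real) \<Rightarrow> (nat \<Rightarrow> real) \<Rightarrow> nat \<Rightarrow> real" where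
  "il u v = (\<lambda>n. if even n then u (n div 2) else v (n div 2))"

lemma lp_il: assumes p: "1 \<le> p" and u: "u \<in> lp_space p" and v: "v \<in> lp_space p"
  shows "il u v \<in> lp_space p \<and> lp_norm p (il u v) \<le> 2 * (lp_norm p u + lp_norm p v)"
proof -
  have su: "summable (\<lambda>n. \<bar>u n\<bar> powr p)" and sv: "summable (\<lambda>n. \<bar>v n\<bar> powr p)"
    using u v by (auto simp: lp_space_def)
  have "(\<lambda>n. if even n then \<bar>u (n div 2)\<bar> powr p else \<bar>v ((n - 1) div 2)\<bar> powr p) sums
        ((\<Sum>n. \<bar>v n\<bar> powr p) + (\<Sum>n. \<bar>u n\<bar> powr p))"
    by (rule sums_if) (use su sv in \<open>simp_all add: summable_sums\<close>)
  moreover have "(\<lambda>n. if even n then \<bar>u (n div 2)\<bar> powr p else \<bar>v ((n - 1) div 2)\<bar> powr p) = (\<lambda>n. \<bar>il u v n\<bar> powr p)"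
    by (rule ext) (auto simp: il_def elim: oddE)
  ultimately have s: "(\<lambda>n. \<bar>il u v n\<bar> powr p) sums ((\<Sum>n. \<bar>u n\<bar> powr p) + (\<Sum>n. \<bar>v n\<bar> powr p))"
    by (simp add: add.commute)
  have "lp_norm p (il u v) = ((\<Sum>n. \<bar>u n\<bar> powr p) + (\<Sum>n. \<bar>v n\<bar> powr p)) powr (1/p)"
    unfolding lp_norm_def using sums_unique[OF s] by simp
  also have "\<dots> \<le> 2 * (lp_norm p u + lp_norm p v)"
    unfolding lp_norm_def by (intro powr_sum_le p suminf_nonneg su sv) auto
  finally show ?thesis using sums_summable[OF s] by (simp add: lp_space_def)
qed

lemma lp_scale: assumes p: "1 \<le> p" and u: "u \<in> lp_space p"
  shows "(\<lambda>n. c * u n) \<in> lp_space p \<and> lp_norm p (\<lambda>n. c * u n) \<le> \<bar>c\<bar> * lp_norm p u"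
proof -
  have su: "summable (\<lambda>n. \<bar>u n\<bar> powr p)" using u by (auto simp: lp_space_def)
  have eq: "(\<lambda>n. \<bar>c * u n\<bar> powr p) = (\<lambda>n. \<bar>c\<bar> powr p * \<bar>u n\<bar> powr p)"
    by (simp add: abs_mult powr_mult)
  have "lp_norm p (\<lambda>n. c * u n) = (\<bar>c\<bar> powr p * (\<Sum>n. \<bar>u n\<bar> powr p)) powr (1/p)"
    unfolding lp_norm_def eq using suminf_mult[OF su] by simp
  also have "\<dots> = (\<bar>c\<bar> powr p) powr (1/p) * (\<Sum>n. \<bar>u n\<bar> powr p) powr (1/p)" by (rule powr_mult)
  also have "\<dots> = \<bar>c\<bar> * lp_norm p u" using p by (simp add: powr_powr lp_norm_def)
  finally show ?thesis using summable_mult[OF su] eq by (simp add: lp_space_def)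
qed



context
  fixes w :: "nat \<Rightarrow> real" and p :: real
  assumes p1: "1 \<le> p" and wpos: "\<And>n. w n > 0" and wle: "\<And>n. w n \<le> 1" and dw: "decseq w"
begin

lemma lpD: "y \<in> lp_space p \<Longrightarrow> y \<in> lorentz_space w p \<and> lorentz_norm w p y \<le> lp_norm p y"
  by (rule lp_to_lorentz) (use p1 wpos wle in auto)

lemma B_DD: assumes B: "B \<in> bounded_ops (lorentz_space w p) (lorentz_norm w p) (lp_space p) (lp_norm p)"
  shows "B \<in> bounded_ops (lorentz_space w p) (lorentz_norm w p) (lorentz_space w p) (lorentz_norm w p)"
proof -
  obtain C where C: "\<And>x. x \<in> lorentz_space w p \<Longrightarrow> lp_norm p (B x) \<le> C * lorentz_norm w p x"
    using bops_bound[OF B lor_nonneg] by blast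
  show ?thesis
  proof (rule bops_intro[where C = C])
    fix x assume x: "x \<in> lorentz_space w p"
    have L: "B x \<in> lp_space p" by (rule bops_in[OF B x])
    show "B x \<in> lorentz_space w p" using lpD[OF L] by blast
    show "lorentz_norm w p (B x) \<le> C * lorentz_norm w p x"
      using lpD[OF L] C[OF x] by linarith
  qed (use bops_add[OF B] bops_scale[OF B] bops_out[OF B] in auto)
qed

lemma j_B: assumes B: "B \<in> bounded_ops (lorentz_space w p) (lorentz_norm w p) (lp_space p) (lp_norm p)"
  shows "formal_identity p (B x) = B x"
  using bops_into[OF B zero_L] by (simp add: formal_identity_def)

lemma J_char: "T \<in> J_j w p \<longleftrightarrow> (\<exists>A B.
      A \<in> bounded_ops (lorentz_space w p) (lorentz_norm w p) (lorentz_space w p) (lorentz_norm w p) \<and>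
      B \<in> bounded_ops (lorentz_space w p) (lorentz_norm w p) (lp_space p) (lp_norm p) \<and>
      T = (\<lambda>x. A (B x)))"
proof -
  have eq: "\<And>A B. B \<in> bounded_ops (lorentz_space w p) (lorentz_norm w p) (lp_space p) (lp_norm p) \<Longrightarrow>
     (\<lambda>x. A (formal_identity p (B x))) = (\<lambda>x. A (B x))" using j_B by simp
  show ?thesis unfolding J_j_def mem_Collect_eq
  proof
    assume "\<exists>A B. A \<in> bounded_ops (lorentz_space w p) (lorentz_norm w p) (lorentz_space w p) (lorentz_norm w p) \<and>
      B \<in> bounded_ops (lorentz_space w p) (lorentz_norm w p) (lp_space p) (lp_norm p) \<and>
      T = (\<lambda>x. A (formal_identity p (B x)))"
    then show "\<exists>A B. A \<in> bounded_ops (lorentz_space w p) (lorentz_norm w p) (lorentz_space w p) (lorentz_norm w p) \<and>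
      B \<in> bounded_ops (lorentz_space w p) (lorentz_norm w p) (lp_space p) (lp_norm p) \<and>
      T = (\<lambda>x. A (B x))" using eq by metis
  next
    assume "\<exists>A B. A \<in> bounded_ops (lorentz_space w p) (lorentz_norm w p) (lorentz_space w p) (lorentz_norm w p) \<and>
      B \<in> bounded_ops (lorentz_space w p) (lorentz_norm w p) (lp_space p) (lp_norm p) \<and>
      T = (\<lambda>x. A (B x))"
    then show "\<exists>A B. A \<in> bounded_ops (lorentz_space w p) (lorentz_norm w p) (lorentz_space w p) (lorentz_norm w p) \<and>
      B \<in> bounded_ops (lorentz_space w p) (lorentz_norm w p) (lp_space p) (lp_norm p) \<and>
      T = (\<lambda>x. A (formal_identity p (B x)))" using eq by metis
  qed
qed

lemma J_sub: assumes "T \<in> J_j w p"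
  shows "T \<in> bounded_ops (lorentz_space w p) (lorentz_norm w p) (lorentz_space w p) (lorentz_norm w p)"
proof -
  from assms obtain A B where A: "A \<in> bounded_ops (lorentz_space w p) (lorentz_norm w p) (lorentz_space w p) (lorentz_norm w p)"
    and B: "B \<in> bounded_ops (lorentz_space w p) (lorentz_norm w p) (lp_space p) (lp_norm p)"
    and T: "T = (\<lambda>x. A (B x))" unfolding J_char by blast
  show ?thesis unfolding T by (rule bops_comp[OF B_DD[OF B] A zero_D lor_nonneg lor_nonneg])
qed

lemma J_zero: "(\<lambda>x n. 0) \<in> J_j w p"
proof -
  have A: "(\<lambda>x n. 0) \<in> bounded_ops (lorentz_space w p) (lorentz_norm w p) (lorentz_space w p) (lorentz_norm w p)"
    by (rule bops_intro[where C=0]) (auto simp: zero_D lorentz_norm_def dec_zero)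
  have B: "(\<lambda>x n. 0) \<in> bounded_ops (lorentz_space w p) (lorentz_norm w p) (lp_space p) (lp_norm p)"
    by (rule bops_intro[where C=0]) (auto simp: zero_L lp_norm_def)
  show ?thesis unfolding J_char using A B by (intro exI[of _ "\<lambda>x n. 0"]) auto
qed

lemma J_scale: assumes "T \<in> J_j w p" shows "(\<lambda>x n. c * T x n) \<in> J_j w p"
proof -
  from assms obtain A B where A: "A \<in> bounded_ops (lorentz_space w p) (lorentz_norm w p) (lorentz_space w p) (lorentz_norm w p)"
    and B: "B \<in> bounded_ops (lorentz_space w p) (lorentz_norm w p) (lp_space p) (lp_norm p)"
    and T: "T = (\<lambda>x. A (B x))" unfolding J_char by blast
  obtain C where C: "\<And>x. x \<in> lorentz_space w p \<Longrightarrow> lp_norm p (B x) \<le> C * lorentz_norm w p x"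
    using bops_bound[OF B lor_nonneg] by blast
  define B' where "B' = (\<lambda>x n. c * B x n)"
  have BL: "B x \<in> lp_space p" for x by (rule bops_into[OF B zero_L])
  have BD: "B x \<in> lorentz_space w p" for x using lpD[OF BL] by blast
  have B': "B' \<in> bounded_ops (lorentz_space w p) (lorentz_norm w p) (lp_space p) (lp_norm p)"
  proof (rule bops_intro[where C = "\<bar>c\<bar> * C"])
    fix x assume x: "x \<in> lorentz_space w p"
    show "B' x \<in> lp_space p" unfolding B'_def using lp_scale[OF p1 BL] by blast
    have "lp_norm p (B' x) \<le> \<bar>c\<bar> * lp_norm p (B x)" unfolding B'_def using lp_scale[OF p1 BL] by blast
    also have "\<dots> \<le> \<bar>c\<bar> * (C * lorentz_norm w p x)" by (intro mult_left_mono C x) auto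
    finally show "lp_norm p (B' x) \<le> \<bar>c\<bar> * C * lorentz_norm w p x" by (simp add: mult.assoc)
    fix d show "B' (\<lambda>n. d * x n) = (\<lambda>n. d * B' x n)" unfolding B'_def using bops_scale[OF B x]
      by (simp add: algebra_simps)
    fix y assume y: "y \<in> lorentz_space w p"
    show "B' (\<lambda>n. x n + y n) = (\<lambda>n. B' x n + B' y n)" unfolding B'_def using bops_add[OF B x y]
      by (simp add: algebra_simps)
  next
    fix x assume "x \<notin> lorentz_space w p"
    then show "B' x = (\<lambda>n. 0)" unfolding B'_def using bops_out[OF B] by simp
  qed
  have "(\<lambda>x n. c * T x n) = (\<lambda>x. A (B' x))"
    unfolding T B'_def using bops_scale[OF A BD] by simp
  then show ?thesis unfolding J_char using A B' by blast
qed

lemma J_comp: assumes "T \<in> J_j w p"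
  and A': "A' \<in> bounded_ops (lorentz_space w p) (lorentz_norm w p) (lorentz_space w p) (lorentz_norm w p)"
  and B': "B' \<in> bounded_ops (lorentz_space w p) (lorentz_norm w p) (lorentz_space w p) (lorentz_norm w p)"
  shows "(\<lambda>x. A' (T (B' x))) \<in> J_j w p"
proof -
  from assms obtain A B where A: "A \<in> bounded_ops (lorentz_space w p) (lorentz_norm w p) (lorentz_space w p) (lorentz_norm w p)"
    and B: "B \<in> bounded_ops (lorentz_space w p) (lorentz_norm w p) (lp_space p) (lp_norm p)"
    and T: "T = (\<lambda>x. A (B x))" unfolding J_char by blast
  have 1: "(\<lambda>x. A' (A x)) \<in> bounded_ops (lorentz_space w p) (lorentz_norm w p) (lorentz_space w p) (lorentz_norm w p)"
    by (rule bops_comp[OF A A' zero_D lor_nonneg lor_nonneg])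
  have 2: "(\<lambda>x. B (B' x)) \<in> bounded_ops (lorentz_space w p) (lorentz_norm w p) (lp_space p) (lp_norm p)"
    by (rule bops_comp[OF B' B zero_D lor_nonneg lor_nonneg])
  show ?thesis unfolding J_char T using 1 2 by blast
qed

lemma Dadd: "x \<in> lorentz_space w p \<Longrightarrow> y \<in> lorentz_space w p \<Longrightarrow> (\<lambda>k. x k + y k) \<in> lorentz_space w p \<and>
     lorentz_norm w p (\<lambda>k. x k + y k) \<le> (2 powr (p+1)) powr (1/p) * 2 * (lorentz_norm w p x + lorentz_norm w p y)"
  by (rule D_add) (use p1 wpos dw in auto)

lemma Dsub: "x \<in> lorentz_space w p \<Longrightarrow> inj g \<Longrightarrow> strict_mono g \<Longrightarrow>
   (\<lambda>k. x (g k)) \<in> lorentz_space w p \<and> lorentz_norm w p (\<lambda>k. x (g k)) \<le> lorentz_norm w p x"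
  by (rule D_sub) (use p1 wpos in auto)

lemma Dscale: "x \<in> lorentz_space w p \<Longrightarrow> (\<lambda>k. c * x k) \<in> lorentz_space w p"
  by (rule D_scale) (use p1 wpos in auto)

lemma ev_D: "x \<in> lorentz_space w p \<Longrightarrow> (\<lambda>k. x (2*k)) \<in> lorentz_space w p \<and> lorentz_norm w p (\<lambda>k. x (2*k)) \<le> lorentz_norm w p x"
  by (rule Dsub) (auto simp: inj_def strict_mono_def)
lemma od_D: "x \<in> lorentz_space w p \<Longrightarrow> (\<lambda>k. x (2*k+1)) \<in> lorentz_space w p \<and> lorentz_norm w p (\<lambda>k. x (2*k+1)) \<le> lorentz_norm w p x"
  by (rule Dsub) (auto simp: inj_def strict_mono_def)

lemma J_add: assumes S: "S \<in> J_j w p" and T: "T \<in> J_j w p"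
  shows "(\<lambda>x n. S x n + T x n) \<in> J_j w p"
proof -
  let ?D = "lorentz_space w p" and ?N = "lorentz_norm w p"
  from S obtain A1 B1 where A1: "A1 \<in> bounded_ops ?D ?N ?D ?N"
    and B1: "B1 \<in> bounded_ops ?D ?N (lp_space p) (lp_norm p)"
    and S': "S = (\<lambda>x. A1 (B1 x))" unfolding J_char by blast
  from T obtain A2 B2 where A2: "A2 \<in> bounded_ops ?D ?N ?D ?N"
    and B2: "B2 \<in> bounded_ops ?D ?N (lp_space p) (lp_norm p)"
    and T': "T = (\<lambda>x. A2 (B2 x))" unfolding J_char by blast
  obtain C1 where C1: "C1 \<ge> 0" "\<And>x. x \<in> ?D \<Longrightarrow> lp_norm p (B1 x) \<le> C1 * ?N x"
    using bops_bound[OF B1 lor_nonneg] by blast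
  obtain C2 where C2: "C2 \<ge> 0" "\<And>x. x \<in> ?D \<Longrightarrow> lp_norm p (B2 x) \<le> C2 * ?N x"
    using bops_bound[OF B2 lor_nonneg] by blast
  obtain E1 where E1: "E1 \<ge> 0" "\<And>x. x \<in> ?D \<Longrightarrow> ?N (A1 x) \<le> E1 * ?N x"
    using bops_bound[OF A1 lor_nonneg] by blast
  obtain E2 where E2: "E2 \<ge> 0" "\<And>x. x \<in> ?D \<Longrightarrow> ?N (A2 x) \<le> E2 * ?N x"
    using bops_bound[OF A2 lor_nonneg] by blast
  have B1L: "B1 x \<in> lp_space p" for x by (rule bops_into[OF B1 zero_L])
  have B2L: "B2 x \<in> lp_space p" for x by (rule bops_into[OF B2 zero_L])
  define B where "B = (\<lambda>x. il (B1 x) (B2 x))"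
  have B: "B \<in> bounded_ops ?D ?N (lp_space p) (lp_norm p)"
  proof (rule bops_intro[where C = "2 * (C1 + C2)"])
    fix x assume x: "x \<in> ?D"
    show "B x \<in> lp_space p" unfolding B_def using lp_il[OF p1 B1L B2L] by blast
    have "lp_norm p (B x) \<le> 2 * (lp_norm p (B1 x) + lp_norm p (B2 x))"
      unfolding B_def using lp_il[OF p1 B1L B2L] by blast
    also have "\<dots> \<le> 2 * (C1 * ?N x + C2 * ?N x)" using C1(2)[OF x] C2(2)[OF x] by simp
    finally show "lp_norm p (B x) \<le> 2 * (C1 + C2) * ?N x" by (simp add: algebra_simps)
    fix c show "B (\<lambda>n. c * x n) = (\<lambda>n. c * B x n)"
      unfolding B_def il_def using bops_scale[OF B1 x] bops_scale[OF B2 x] by (auto intro!: ext)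
    fix y assume y: "y \<in> ?D"
    show "B (\<lambda>n. x n + y n) = (\<lambda>n. B x n + B y n)"
      unfolding B_def il_def using bops_add[OF B1 x y] bops_add[OF B2 x y] by (auto intro!: ext)
  next
    fix x assume "x \<notin> ?D"
    then show "B x = (\<lambda>n. 0)" unfolding B_def il_def using bops_out[OF B1] bops_out[OF B2] by auto
  qed
  define A where "A = (\<lambda>z. if z \<in> ?D then (\<lambda>n. A1 (\<lambda>k. z (2*k)) n + A2 (\<lambda>k. z (2*k+1)) n) else (\<lambda>n. 0))"
  have A: "A \<in> bounded_ops ?D ?N ?D ?N"
  proof (rule bops_intro[where C = "(2 powr (p+1)) powr (1/p) * 2 * (E1 + E2)"])
    fix z assume z: "z \<in> ?D"
    have e: "(\<lambda>k. z (2*k)) \<in> ?D" "?N (\<lambda>k. z (2*k)) \<le> ?N z" using ev_D[OF z] by auto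
    have o: "(\<lambda>k. z (2*k+1)) \<in> ?D" "?N (\<lambda>k. z (2*k+1)) \<le> ?N z" using od_D[OF z] by auto
    have Az: "A z = (\<lambda>n. A1 (\<lambda>k. z (2*k)) n + A2 (\<lambda>k. z (2*k+1)) n)" using z by (simp add: A_def)
    show "A z \<in> ?D" unfolding Az using Dadd[OF bops_in[OF A1 e(1)] bops_in[OF A2 o(1)]] by blast
    have "?N (A z) \<le> (2 powr (p+1)) powr (1/p) * 2 * (?N (A1 (\<lambda>k. z (2*k))) + ?N (A2 (\<lambda>k. z (2*k+1))))"
      unfolding Az using Dadd[OF bops_in[OF A1 e(1)] bops_in[OF A2 o(1)]] by blast
    also have "\<dots> \<le> (2 powr (p+1)) powr (1/p) * 2 * (E1 * ?N z + E2 * ?N z)"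
    proof (rule mult_left_mono)
      have "?N (A1 (\<lambda>k. z (2*k))) \<le> E1 * ?N z"
        using E1(2)[OF e(1)] mult_left_mono[OF e(2) E1(1)] by linarith
      moreover have "?N (A2 (\<lambda>k. z (2*k+1))) \<le> E2 * ?N z"
        using E2(2)[OF o(1)] mult_left_mono[OF o(2) E2(1)] by linarith
      ultimately show "?N (A1 (\<lambda>k. z (2*k))) + ?N (A2 (\<lambda>k. z (2*k+1))) \<le> E1 * ?N z + E2 * ?N z" by linarith
    qed simp
    finally show "?N (A z) \<le> (2 powr (p+1)) powr (1/p) * 2 * (E1 + E2) * ?N z" by (simp add: algebra_simps)
    fix c
    have cz: "(\<lambda>n. c * z n) \<in> ?D" by (rule Dscale[OF z])
    show "A (\<lambda>n. c * z n) = (\<lambda>n. c * A z n)"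
      unfolding Az using cz bops_scale[OF A1 e(1), of c] bops_scale[OF A2 o(1), of c]
      by (simp add: A_def algebra_simps)
    fix y assume y: "y \<in> ?D"
    have e2: "(\<lambda>k. y (2*k)) \<in> ?D" using ev_D[OF y] by auto
    have o2: "(\<lambda>k. y (2*k+1)) \<in> ?D" using od_D[OF y] by auto
    have zy: "(\<lambda>n. z n + y n) \<in> ?D" using Dadd[OF z y] by blast
    show "A (\<lambda>n. z n + y n) = (\<lambda>n. A z n + A y n)"
      using zy z y bops_add[OF A1 e(1) e2] bops_add[OF A2 o(1) o2]
      by (simp add: A_def algebra_simps)
  next
    fix z assume "z \<notin> ?D" then show "A z = (\<lambda>n. 0)" by (simp add: A_def)
  qed
  have BD: "B x \<in> ?D" for x
    using lpD[OF bops_into[OF B zero_L]] by blast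
  have "(\<lambda>x n. S x n + T x n) = (\<lambda>x. A (B x))"
  proof (rule ext)
    fix x
    have ev: "(\<lambda>k. B x (2*k)) = B1 x" by (simp add: B_def il_def)
    have od: "(\<lambda>k. B x (2*k+1)) = B2 x" by (simp add: B_def il_def)
    show "(\<lambda>n. S x n + T x n) = A (B x)" using BD[of x] unfolding A_def ev od S' T' by simp
  qed
  then show ?thesis unfolding J_char using A B by blast
qed

end


theorem proposition4p1:
  fixes w :: "nat \<Rightarrow> real" and p :: real
  assumes "1 \<le> p" and "w 0 = 1" and "\<And>n. w n > 0" and "decseq w"
    and "w \<longlonglongrightarrow> 0" and "\<not> summable w"
  shows "is_operator_ideal (lorentz_space w p) (lorentz_norm w p) (J_j w p)"
proof -
  have wle: "\<And>n. w n \<le> 1" using assms(2,4) by (metis decseq_def zero_le)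
  show ?thesis unfolding is_operator_ideal_def
    using J_sub[OF assms(1,3) wle assms(4)] J_zero[OF assms(1,3) wle assms(4)]
      J_add[OF assms(1,3) wle assms(4)] J_scale[OF assms(1,3) wle assms(4)]
      J_comp[OF assms(1,3) wle assms(4)]
    by blast
qed

end
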